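(* Let $f(X)=X+\frac{1}{X}$. There are infinitely many pairs of positive rational numbers $(y,z)$ such that $f(4/3)\,f(y)=f(z)$. *)

theory Defs
  imports Complex_Main
begin

definition f :: "rat \<Rightarrow> rat" where
  "f X = X + 1 / X"

end

theory Submission imports Defs begin

definition gg :: "rat \<Rightarrow> rat" where "gg X = X^2 - 769*X + 90000"

definition HH :: "rat \<Rightarrow> rat" where
  "HH X = X^4 - 2*769*X^3 + 6*90000*X^2 - 2*769*90000*X + 90000^2"

lemma poly_id: "(X^2-90000)^4 - 769*(X^2-90000)^2*(4*X*gg X) + 90000*(4*X*gg X)^2 = (HH X)^2"
  unfolding gg_def HH_def by algebra

lemma dbl_id:
  fixes X :: rat
  assumes "X \<noteq> 0" "gg X \<noteq> 0"
  shows "((X^2-90000)^2/(4*X*gg X)) * gg ((X^2-90000)^2/(4*X*gg X))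
     = X * gg X * ((X^2-90000)*HH X/(8*X^2*(gg X)^2))^2"
proof -
  define N where "N = (X^2-90000)^2"
  define D where "D = 4*X*gg X"
  have D: "D \<noteq> 0" using assms D_def by simp
  have "(N/D) * gg (N/D) = N*(N^2 - 769*N*D + 90000*D^2)/D^3"
    using D unfolding gg_def by (simp add: field_simps power2_eq_square power3_eq_cube)
  also have "N^2 - 769*N*D + 90000*D^2 = (HH X)^2"
    unfolding N_def D_def gg_def HH_def by algebra
  finally have "(N/D) * gg (N/D) = N*(HH X)^2/D^3" .
  also have "\<dots> = X * gg X * ((X^2-90000)*HH X/(8*X^2*(gg X)^2))^2"
    using assms unfolding N_def D_def by (simp add: field_simps power2_eq_square power3_eq_cube)
  finally show ?thesis unfolding N_def D_def .
qed

lemma sol: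
  fixes X Y :: rat
  assumes X: "X > 0" and g: "gg X \<noteq> 0" and Y: "X * gg X = Y^2"
  defines "k \<equiv> X/300"
  defines "y \<equiv> \<bar>Y\<bar> / (300*k*\<bar>25-12*k\<bar>)"
  shows "0 < y \<and> 0 < k*y \<and> f (4/3) * f y = f (k*y)"
proof -
  have k: "k > 0" using X k_def by simp
  have k2: "25 - 12*k \<noteq> 0"
  proof
    assume "25 - 12*k = 0" then have "X = 625" using k_def by simp
    then show False using g by (simp add: gg_def)
  qed
  have Y0: "Y \<noteq> 0" using X g Y by auto
  have yp: "y > 0" using k k2 Y0 y_def by simp
  have ysq: "y^2 * (300*k*(25-12*k))^2 = Y^2"
    using k k2 unfolding y_def by (simp add: power_divide abs_mult power_mult_distrib)
  define B where "B = 300*k*(25-12*k)"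
  have B: "B \<noteq> 0" using k k2 B_def by simp
  have "(y^2 * B) * B = (300*(12-25*k)) * B"
    using ysq Y unfolding gg_def k_def B_def by (simp add: algebra_simps power2_eq_square)
  then have "y^2 * B = 300*(12-25*k)" using B by simp
  then have key: "y^2 * k * (25-12*k) = 12 - 25*k"
    unfolding B_def by (simp add: algebra_simps)
  have "f (4/3) * f y = f (k*y)"
    unfolding f_def using yp k key
    by (simp add: field_simps power2_eq_square) (drule arg_cong[where f="\<lambda>t. y*t"], simp add: algebra_simps)
  then show ?thesis using yp k by simp
qed

fun sq :: "nat \<Rightarrow> int \<times> int" where
  "sq 0 = (3227142780625, 15421329)"
| "sq (Suc n) = (let p = fst (sq n); m = snd (sq n); q = 4^(n+4)*m in
     ((p^2 - 90000*q^2)^2, m*p*(p^2 - 769*p*q + 90000*q^2)))"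

lemma sq_odd: "odd (fst (sq n)) \<and> odd (snd (sq n))"
proof (induction n)
  case 0 then show ?case by simp
next
  case (Suc n)
  define p where "p = fst (sq n)"
  define m where "m = snd (sq n)"
  define q where "q = (4::int)^(n+4)*m"
  have ev: "even q" unfolding q_def by simp
  have "odd p" "odd m" using Suc p_def m_def by auto
  then have "odd ((p^2 - 90000*q^2)^2)" "odd (m*p*(p^2 - 769*p*q + 90000*q^2))"
    using ev by auto
  then show ?case by (simp add: Let_def p_def m_def q_def)
qed

definition Xs :: "nat \<Rightarrow> rat" where
  "Xs n = of_int (fst (sq n)) / (4^(n+4) * of_int (snd (sq n)))"

lemma gg_Xs: "gg (Xs n) * (4^(n+4) * of_int (snd (sq n)))^2
   = of_int (let p = fst (sq n); q = 4^(n+4)*snd (sq n) in p^2 - 769*p*q + 90000*q^2)"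
proof -
  have m: "snd (sq n) \<noteq> 0" using sq_odd[of n] by auto
  show ?thesis using m unfolding Xs_def gg_def Let_def
    by (simp add: field_simps power2_eq_square)
qed

lemma gg_Xs_nz: "gg (Xs n) \<noteq> 0"
proof
  assume "gg (Xs n) = 0"
  then have "(of_int (let p = fst (sq n); q = 4^(n+4)*snd (sq n) in p^2 - 769*p*q + 90000*q^2) :: rat) = 0"
    using gg_Xs[of n] by simp
  then have "(let p = fst (sq n); q = 4^(n+4)*snd (sq n) in p^2 - 769*p*q + 90000*q^2) = 0"
    by (simp only: of_int_eq_0_iff)
  moreover have "odd (let p = fst (sq n); q = (4::int)^(n+4)*snd (sq n) in p^2 - 769*p*q + 90000*q^2)"
    using sq_odd[of n] by (simp add: Let_def)
  ultimately show False by simp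
qed

lemma Xs_nz: "Xs n \<noteq> 0"
  using sq_odd[of n] unfolding Xs_def by auto

lemma Xs_Suc: "Xs (Suc n) = (Xs n^2 - 90000)^2 / (4 * Xs n * gg (Xs n))"
proof -
  define p where "p = fst (sq n)"
  define m where "m = snd (sq n)"
  define q where "q = (4::int)^(n+4)*m"
  have m: "m \<noteq> 0" and p: "p \<noteq> 0" using sq_odd[of n] p_def m_def by auto
  have g: "gg (Xs n) * (of_int q)^2 = of_int (p^2 - 769*p*q + 90000*q^2)"
    using gg_Xs[of n] unfolding p_def m_def q_def Let_def by simp
  have gnz: "gg (Xs n) \<noteq> 0" by (rule gg_Xs_nz)
  have X: "Xs n = of_int p / of_int q" unfolding Xs_def p_def q_def m_def by simp
  have qnz: "q \<noteq> 0" using m q_def by simp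
  have "Xs (Suc n) = of_int ((p^2 - 90000*q^2)^2) / (4^(n+5) * of_int (m*p*(p^2 - 769*p*q + 90000*q^2)))"
    unfolding Xs_def by (simp add: Let_def p_def m_def q_def)
  also have "\<dots> = of_int ((p^2 - 90000*q^2)^2) / (4 * of_int q * of_int p * (gg (Xs n) * (of_int q)^2))"
  proof -
    have "(4::rat)^(n+5) * of_int (m*p*(p^2 - 769*p*q + 90000*q^2)) = 4 * of_int q * of_int p * of_int (p^2 - 769*p*q + 90000*q^2)"
      unfolding q_def by (simp add: power_add mult_ac)
    then show ?thesis by (simp only: g)
  qed
  also have "\<dots> = (Xs n^2 - 90000)^2 / (4 * Xs n * gg (Xs n))"
    using qnz p gnz unfolding X by (simp add: field_simps power2_eq_square)
  finally show ?thesis .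
qed

lemma Xs_curve: "Xs n > 0 \<and> (\<exists>Y. Xs n * gg (Xs n) = Y^2)"
proof (induction n)
  case 0
  have X0: "Xs 0 = 3227142780625 / 3947860224" unfolding Xs_def by simp
  show ?case unfolding X0 gg_def
    by (intro conjI exI[of _ "2553109412619865625/248051953594368"]) (simp_all add: power2_eq_square)
next
  case (Suc n)
  then obtain Y where Y: "Xs n * gg (Xs n) = Y^2" by blast
  have X: "Xs n \<noteq> 0" and g: "gg (Xs n) \<noteq> 0" using Xs_nz gg_Xs_nz by auto
  have "Xs (Suc n) * gg (Xs (Suc n)) = Y^2 * ((Xs n^2-90000)*HH (Xs n)/(8*(Xs n)^2*(gg (Xs n))^2))^2"
    unfolding Xs_Suc using dbl_id[OF X g] Y by simp
  then have c: "\<exists>Y. Xs (Suc n) * gg (Xs (Suc n)) = Y^2" by (metis power_mult_distrib)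
  have "Xs (Suc n) = (Xs n^2 - 90000)^2 / (4 * Y^2)" unfolding Xs_Suc
    by (simp add: Y mult.assoc)
  then have "Xs (Suc n) \<ge> 0" by simp
  then have "Xs (Suc n) > 0" using Xs_nz[of "Suc n"] by linarith
  then show ?case using c by blast
qed

lemma Xs_inj: "inj Xs"
proof -
  have *: False if ij: "i < j" and e: "Xs i = Xs j" for i j
  proof -
    define pi where "pi = fst (sq i)"
    define mi where "mi = snd (sq i)"
    define pj where "pj = fst (sq j)"
    define mj where "mj = snd (sq j)"
    have o: "odd pi" "odd mi" "odd pj" "odd mj" using sq_odd[of i] sq_odd[of j] pi_def mi_def pj_def mj_def by auto
    then have nz: "mi \<noteq> 0" "mj \<noteq> 0" by auto
    have "(of_int pi :: rat) / (4^(i+4) * of_int mi) = of_int pj / (4^(j+4) * of_int mj)"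
      using e unfolding Xs_def pi_def mi_def pj_def mj_def by simp
    then have "(of_int pi :: rat) * (4^(j+4) * of_int mj) = of_int pj * (4^(i+4) * of_int mi)"
      using nz by (simp add: field_simps)
    then have "pi * (4^(j+4) * mj) = pj * (4^(i+4) * mi)"
      by (metis (mono_tags) of_int_eq_iff of_int_mult of_int_numeral of_int_power)
    moreover have "(4::int)^(j+4) = 4^(i+4) * 4^(j-i)" using ij
      by (metis add_diff_inverse_nat add.commute add.left_commute not_less_iff_gr_or_eq order.asym power_add)
    ultimately have "4^(i+4) * (pi * 4^(j-i) * mj) = 4^(i+4) * (pj * mi)"
      by (simp add: mult_ac)
    then have "pi * 4^(j-i) * mj = pj * mi" by simp
    moreover have "even ((4::int)^(j-i))" using ij by simp
    ultimately show False using o by (metis even_mult_iff)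
  qed
  show ?thesis
  proof (rule injI)
    fix i j assume "Xs i = Xs j"
    then show "i = j" using *[of i j] *[of j i] by (metis linorder_neqE_nat)
  qed
qed

theorem mainTheorem8:
  shows "infinite {(y::rat, z::rat). 0 < y \<and> 0 < z \<and> f (4/3) * f y = f z}"
proof -
  define Y where "Y n = (SOME Y. Xs n * gg (Xs n) = Y^2)" for n
  define k where "k n = Xs n / 300" for n
  define y where "y n = \<bar>Y n\<bar> / (300 * k n * \<bar>25 - 12 * k n\<bar>)" for n
  define F where "F n = (y n, k n * y n)" for n
  have Yn: "Xs n * gg (Xs n) = (Y n)^2" for n
    unfolding Y_def using Xs_curve[of n] by (metis (mono_tags) someI_ex)
  have S: "0 < y n \<and> 0 < k n * y n \<and> f (4/3) * f (y n) = f (k n * y n)" for n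
    using sol[OF conjunct1[OF Xs_curve[of n]] gg_Xs_nz Yn] unfolding y_def k_def by simp
  have "range F \<subseteq> {(y::rat, z::rat). 0 < y \<and> 0 < z \<and> f (4/3) * f y = f z}"
    using S unfolding F_def by auto
  moreover have "inj F"
  proof (rule injI)
    fix i j assume "F i = F j"
    then have "y i = y j" "k i * y i = k j * y j" unfolding F_def by auto
    then have "k i = k j" using S[of i] by simp
    then have "Xs i = Xs j" unfolding k_def by simp
    then show "i = j" using Xs_inj by (simp add: inj_eq)
  qed
  then have "infinite (range F)" using finite_imageD[of F UNIV] infinite_UNIV_nat by blast
  ultimately show ?thesis using infinite_super by blast
qed

end
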